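(* Let $M$ be a simple $L$-module such that (i) for some $m\ge 1$, either $d^m$ or $u^m$ acts on $M$ as a scalar, and (ii) $M$ contains a weight vector. Then $M$ is finite-dimensional.
   Context: Let $r,s,\gamma\in\mathbb C$ with $rs\neq 0$ and $\phi\in\mathbb C[x]$. The generalized down-up algebra $L=L(\phi,r,s,\gamma)$ is the associative $\mathbb C$-algebra generated by $u,d,h$ subject to $hu-ruh=\gamma u$, $dh-rhd=\gamma d$, $du-sud=\phi(h)$. Modules are left modules. A weight vector of an $L$-module $M$ is a nonzero $v\in M$ with $hv=\lambda v$ and $(ud)v=\beta v$ for some $(\lambda,\beta)\in\mathbb C^2$. *)

theory Defs
  imports "HOL-Computational_Algebra.Polynomial"
begin

text \<open>An L-module for the generalized down-up algebra L(phi,r,s,gamma) is a complex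
vector space V (given by a scalar multiplication scale on an additive group) with
three linear operators U, D, H (the actions of u, d, h) satisfying the defining
relations of L.\<close>

definition poly_op ::
  "(complex \<Rightarrow> 'v::ab_group_add \<Rightarrow> 'v) \<Rightarrow> complex poly \<Rightarrow> ('v \<Rightarrow> 'v) \<Rightarrow> 'v \<Rightarrow> 'v" where
  "poly_op scale p H v = (\<Sum>i\<le>degree p. scale (coeff p i) ((H ^^ i) v))"

definition gdu_module ::
  "complex poly \<Rightarrow> complex \<Rightarrow> complex \<Rightarrow> complex \<Rightarrow>
   (complex \<Rightarrow> 'v::ab_group_add \<Rightarrow> 'v) \<Rightarrow> ('v \<Rightarrow> 'v) \<Rightarrow> ('v \<Rightarrow> 'v) \<Rightarrow> ('v \<Rightarrow> 'v) \<Rightarrow> bool" where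
  "gdu_module phi r s \<gamma> scale U D H \<longleftrightarrow>
     vector_space scale \<and>
     Vector_Spaces.linear scale scale U \<and>
     Vector_Spaces.linear scale scale D \<and>
     Vector_Spaces.linear scale scale H \<and>
     (\<forall>v. H (U v) - scale r (U (H v)) = scale \<gamma> (U v)) \<and>
     (\<forall>v. D (H v) - scale r (H (D v)) = scale \<gamma> (D v)) \<and>
     (\<forall>v. D (U v) - scale s (U (D v)) = poly_op scale phi H v)"

text \<open>Submodules are exactly the subspaces stable under the generators u, d, h.
A module is simple if it is nonzero and has no submodules besides 0 and itself.\<close>

definition gdu_simple ::
  "(complex \<Rightarrow> 'v::ab_group_add \<Rightarrow> 'v) \<Rightarrow> ('v \<Rightarrow> 'v) \<Rightarrow> ('v \<Rightarrow> 'v) \<Rightarrow> ('v \<Rightarrow> 'v) \<Rightarrow> bool" where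
  "gdu_simple scale U D H \<longleftrightarrow>
     (UNIV :: 'v set) \<noteq> {0} \<and>
     (\<forall>W. module.subspace scale W \<and> U ` W \<subseteq> W \<and> D ` W \<subseteq> W \<and> H ` W \<subseteq> W
          \<longrightarrow> W = {0} \<or> W = UNIV)"

definition weight_vector ::
  "(complex \<Rightarrow> 'v::ab_group_add \<Rightarrow> 'v) \<Rightarrow> ('v \<Rightarrow> 'v) \<Rightarrow> ('v \<Rightarrow> 'v) \<Rightarrow> ('v \<Rightarrow> 'v) \<Rightarrow> 'v \<Rightarrow> bool" where
  "weight_vector scale U D H v \<longleftrightarrow>
     v \<noteq> 0 \<and> (\<exists>lam \<beta>. H v = scale lam v \<and> U (D v) = scale \<beta> v)"

definition fin_dim :: "(complex \<Rightarrow> 'v::ab_group_add \<Rightarrow> 'v) \<Rightarrow> bool" where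
  "fin_dim scale \<longleftrightarrow> (\<exists>B. finite B \<and> module.span scale B = UNIV)"

end

theory Submission imports Defs begin

primrec lamU :: "complex \<Rightarrow> complex \<Rightarrow> complex \<Rightarrow> nat \<Rightarrow> complex" where
  "lamU r g l 0 = l" | "lamU r g l (Suc n) = r * lamU r g l n + g"
primrec lamD :: "complex \<Rightarrow> complex \<Rightarrow> complex \<Rightarrow> nat \<Rightarrow> complex" where
  "lamD r g l 0 = l" | "lamD r g l (Suc n) = (lamD r g l n - g) / r"
primrec bU :: "complex poly \<Rightarrow> complex \<Rightarrow> complex \<Rightarrow> complex \<Rightarrow> complex \<Rightarrow> complex \<Rightarrow> nat \<Rightarrow> complex" where
  "bU p r s g l b 0 = b" | "bU p r s g l b (Suc n) = s * bU p r s g l b n + poly p (lamU r g l n)"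

locale gdu = vector_space scale for scale :: "complex \<Rightarrow> 'v::ab_group_add \<Rightarrow> 'v" (infixr "*s" 75) +
  fixes phi :: "complex poly" and r s g :: complex and U D H :: "'v \<Rightarrow> 'v"
  assumes Uadd: "U (x + y) = U x + U y" and Usc: "U (a *s x) = a *s U x"
    and Dadd: "D (x + y) = D x + D y" and Dsc: "D (a *s x) = a *s D x"
    and Hadd: "H (x + y) = H x + H y" and Hsc: "H (a *s x) = a *s H x"
    and rel1: "H (U x) - r *s U (H x) = g *s U x"
    and rel2: "D (H x) - r *s H (D x) = g *s D x"
    and rel3: "D (U x) - s *s U (D x) = poly_op scale phi H x"
    and r0: "r \<noteq> 0" and s0: "s \<noteq> 0"
begin

lemma U0[simp]: "U 0 = 0" using Usc[of 0 0] by simp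
lemma D0[simp]: "D 0 = 0" using Dsc[of 0 0] by simp

lemma map_span:
  assumes add: "\<And>x y. F (x + y) = F x + F y" and sc: "\<And>a x. F (a *s x) = a *s F x"
    and S: "\<And>x. x \<in> S \<Longrightarrow> F x \<in> span T" and x: "x \<in> span S"
  shows "F x \<in> span T"
  using x
proof (induct rule: span_induct)
  case base
  have "F 0 = 0" using sc[of 0 0] by simp
  then show ?case unfolding subspace_def
    by (auto simp: add sc span_zero span_add span_scale)
next
  case (step x) then show ?case using S by auto
qed

lemma funpow_sc:
  assumes sc: "\<And>a x. F (a *s x) = a *s F x"
  shows "(F ^^ k) (a *s x) = a *s (F ^^ k) x"
  by (induct k) (auto simp: sc)

lemma poly_op_eigen:
  assumes "H x = \<mu> *s x"
  shows "poly_op scale p H x = poly p \<mu> *s x"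
proof -
  have pw: "(H ^^ i) x = \<mu> ^ i *s x" for i
    by (induct i) (auto simp: Hsc assms mult.commute)
  show ?thesis
    unfolding poly_op_def poly_altdef pw scale_sum_left by simp
qed

lemma HU: assumes "H x = \<mu> *s x" shows "H (U x) = (r * \<mu> + g) *s U x"
proof -
  have "H (U x) = r *s U (H x) + g *s U x" using rel1[of x] by (metis diff_eq_eq add.commute)
  then show ?thesis using assms by (simp add: Usc scale_left_distrib)
qed

lemma HD: assumes "H x = \<mu> *s x" shows "H (D x) = ((\<mu> - g) / r) *s D x"
proof -
  have "r *s H (D x) = D (H x) - g *s D x" using rel2[of x] by (simp add: algebra_simps)
  also have "\<dots> = (\<mu> - g) *s D x" using assms by (simp add: Dsc scale_left_diff_distrib)
  finally have "(1/r) *s (r *s H (D x)) = (1/r) *s ((\<mu> - g) *s D x)" by simp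
  then show ?thesis using r0 by simp
qed

lemma DU_eigen: assumes "H x = \<mu> *s x" "U (D x) = b *s x"
  shows "D (U x) = (s * b + poly phi \<mu>) *s x"
proof -
  have "D (U x) = s *s U (D x) + poly_op scale phi H x" using rel3[of x] by (metis diff_eq_eq add.commute)
  then show ?thesis using assms by (simp add: poly_op_eigen scale_left_distrib)
qed

lemma UD_eigen: assumes "H x = \<mu> *s x" "D (U x) = b *s x"
  shows "U (D x) = ((b - poly phi \<mu>) / s) *s x"
proof -
  have "s *s U (D x) = D (U x) - poly_op scale phi H x" using rel3[of x] by (simp add: algebra_simps)
  also have "\<dots> = (b - poly phi \<mu>) *s x" using assms by (simp add: poly_op_eigen scale_left_diff_distrib)
  finally have "(1/s) *s (s *s U (D x)) = (1/s) *s ((b - poly phi \<mu>) *s x)" by simp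
  then show ?thesis using s0 by simp
qed


lemma eigU: "H v = l *s v \<Longrightarrow> H ((U^^i) v) = lamU r g l i *s (U^^i) v"
  by (induct i) (auto intro: HU)
lemma eigD: "H v = l *s v \<Longrightarrow> H ((D^^i) v) = lamD r g l i *s (D^^i) v"
  by (induct i) (auto intro: HD)

lemma QU: assumes "H v = l *s v" "U (D v) = b *s v"
  shows "U (D ((U^^i) v)) = bU phi r s g l b i *s (U^^i) v"
proof (induct i)
  case 0 then show ?case using assms by simp
next
  case (Suc i)
  have "D (U ((U^^i) v)) = bU phi r s g l b (Suc i) *s (U^^i) v"
    using DU_eigen[OF eigU[OF assms(1)] Suc] by simp
  then show ?case by (simp add: Usc)
qed

lemma DUU: assumes "H v = l *s v" "U (D v) = b *s v"
  shows "D ((U^^Suc i) v) = bU phi r s g l b (Suc i) *s (U^^i) v"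
  using DU_eigen[OF eigU[OF assms(1)] QU[OF assms]] by simp

lemma QD: assumes "H v = l *s v" "U (D v) = b *s v"
  shows "\<exists>c. U (D ((D^^j) v)) = c *s (D^^j) v"
proof (induct j)
  case 0 then show ?case using assms by auto
next
  case (Suc j)
  then obtain c where c: "U (D ((D^^j) v)) = c *s (D^^j) v" by blast
  have "D (U ((D^^Suc j) v)) = c *s (D^^Suc j) v" using c by (simp add: Dsc)
  from UD_eigen[OF eigD[OF assms(1)] this] show ?case by auto
qed

lemma span_all:
  assumes simple: "gdu_simple scale U D H" and v: "v \<noteq> 0" "H v = l *s v" "U (D v) = b *s v"
  shows "span (range (\<lambda>i. (U^^i) v) \<union> range (\<lambda>j. (D^^j) v)) = UNIV"
proof -
  let ?G = "range (\<lambda>i. (U^^i) v) \<union> range (\<lambda>j. (D^^j) v)"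
  let ?W = "span ?G"
  have sU: "U x \<in> ?W" if "x \<in> ?W" for x
  proof (rule map_span[OF Uadd Usc _ that])
    fix y assume "y \<in> ?G"
    then consider i where "y = (U^^i) v" | j where "y = (D^^j) v" by blast
    then show "U y \<in> ?W"
    proof cases
      case (1 i)
      then have "U y = (U^^Suc i) v" by simp
      then show ?thesis by (metis UnI1 rangeI span_base)
    next
      case (2 j)
      show ?thesis
      proof (cases j)
        case 0 then have "U y = (U^^Suc 0) v" using 2 by simp
        then show ?thesis by (metis UnI1 rangeI span_base)
      next
        case (Suc j')
        obtain c where "U (D ((D^^j') v)) = c *s (D^^j') v" using QD[OF v(2,3)] by blast
        then have "U y = c *s (D^^j') v" using 2 Suc by simp
        then show ?thesis by (metis UnI2 rangeI span_base span_scale)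
      qed
    qed
  qed
  have sD: "D x \<in> ?W" if "x \<in> ?W" for x
  proof (rule map_span[OF Dadd Dsc _ that])
    fix y assume "y \<in> ?G"
    then consider i where "y = (U^^i) v" | j where "y = (D^^j) v" by blast
    then show "D y \<in> ?W"
    proof cases
      case (2 j)
      then have "D y = (D^^Suc j) v" by simp
      then show ?thesis by (metis UnI2 rangeI span_base)
    next
      case (1 i)
      show ?thesis
      proof (cases i)
        case 0 then have "D y = (D^^Suc 0) v" using 1 by simp
        then show ?thesis by (metis UnI2 rangeI span_base)
      next
        case (Suc i')
        then have "D y = bU phi r s g l b (Suc i') *s (U^^i') v" using 1 DUU[OF v(2,3)] by simp
        then show ?thesis by (metis UnI1 rangeI span_base span_scale)
      qed
    qed
  qed
  have sH: "H x \<in> ?W" if "x \<in> ?W" for x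
  proof (rule map_span[OF Hadd Hsc _ that])
    fix y assume "y \<in> ?G"
    then consider i where "y = (U^^i) v" | j where "y = (D^^j) v" by blast
    then show "H y \<in> ?W"
    proof cases
      case (1 i) then show ?thesis using eigU[OF v(2)] by (metis UnI1 rangeI span_base span_scale)
    next
      case (2 i) then show ?thesis using eigD[OF v(2)] by (metis UnI2 rangeI span_base span_scale)
    qed
  qed
  have "v \<in> ?W" by (metis UnI1 rangeI span_base funpow_0)
  moreover have "?W = {0} \<or> ?W = UNIV"
    using simple sU sD sH unfolding gdu_simple_def by (meson image_subsetI subspace_span)
  ultimately show ?thesis using v(1) by auto
qed

lemma DpowU: assumes "H v = l *s v" "U (D v) = b *s v"
  shows "(D^^k) ((U^^(k+n)) v) = (\<Prod>t<k. bU phi r s g l b (n+t+1)) *s (U^^n) v"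
proof (induct k)
  case 0 then show ?case by simp
next
  case (Suc k)
  have "(D^^Suc k) ((U^^(Suc k + n)) v) = (D^^k) (D ((U^^Suc (k+n)) v))"
    by (simp add: funpow_Suc_right del: funpow.simps)
  also have "\<dots> = (D^^k) (bU phi r s g l b (Suc (k+n)) *s (U^^(k+n)) v)"
    using DUU[OF assms] by simp
  also have "\<dots> = bU phi r s g l b (Suc (k+n)) *s (D^^k) ((U^^(k+n)) v)"
    by (rule funpow_sc[OF Dsc])
  finally show ?case using Suc by (simp add: ac_simps)
qed


lemma fin_c:
  assumes simple: "gdu_simple scale U D H" and v: "v \<noteq> 0" "H v = l *s v" "U (D v) = b *s v"
    and m: "m \<ge> 1" and Dm: "\<forall>x. (D^^m) x = c *s x" and c: "c \<noteq> 0"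
  shows "fin_dim scale"
proof -
  let ?B = "(\<lambda>i. (U^^i) v) ` {..<m} \<union> (\<lambda>j. (D^^j) v) ` {..<m}"
  have Dj: "(D^^j) v \<in> span ?B" for j
  proof (induct j rule: less_induct)
    case (less j)
    show ?case
    proof (cases "j < m")
      case True then show ?thesis by (intro span_base) auto
    next
      case False
      then have "j = m + (j - m)" by simp
      then have "(D^^j) v = (D^^m) ((D^^(j-m)) v)" by (metis funpow_add o_apply)
      also have "\<dots> = c *s (D^^(j-m)) v" using Dm by simp
      finally show ?thesis using less[of "j - m"] m False by (simp add: span_scale)
    qed
  qed
  have Ui: "(U^^i) v \<in> span ?B" for i
  proof (induct i rule: less_induct)
    case (less i)
    show ?case
    proof (cases "i < m")
      case True then show ?thesis by (intro span_base) auto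
    next
      case False
      define n where "n = i - m"
      then have i: "i = m + n" using False by simp
      have "c *s (U^^i) v = (D^^m) ((U^^(m+n)) v)" using Dm i by simp
      also have "\<dots> = (\<Prod>t<m. bU phi r s g l b (n+t+1)) *s (U^^n) v" by (rule DpowU[OF v(2,3)])
      finally have "(1/c) *s (c *s (U^^i) v) = (1/c) *s ((\<Prod>t<m. bU phi r s g l b (n+t+1)) *s (U^^n) v)"
        by simp
      then have "(U^^i) v = (1/c) *s ((\<Prod>t<m. bU phi r s g l b (n+t+1)) *s (U^^n) v)" using c by simp
      moreover have "n < i" using i m by simp
      ultimately show ?thesis using less[of n] by (simp add: span_scale del: scale_scale)
    qed
  qed
  have "UNIV = span (range (\<lambda>i. (U^^i) v) \<union> range (\<lambda>j. (D^^j) v))"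
    using span_all[OF simple v] by simp
  also have "\<dots> \<subseteq> span ?B"
    using Dj Ui by (intro span_minimal) auto
  finally show ?thesis unfolding fin_dim_def by (intro exI[of _ ?B]) auto
qed


lemma indep_aux:
  fixes f :: "nat \<Rightarrow> 'v" and i0 K :: nat
  assumes hyp: "\<forall>N. f N \<notin> span (f ` {..<N})" and i0: "i0 \<ge> 1"
  shows "x \<in> span (f ` {i0..K}) \<Longrightarrow> x \<in> span (f ` {..<i0}) \<Longrightarrow> x = 0"
proof (induct K arbitrary: x)
  case 0 then show ?case using i0 by simp
next
  case (Suc K)
  show ?case
  proof (cases "Suc K < i0")
    case True then show ?thesis using Suc.prems by simp
  next
    case False
    then have "{i0..Suc K} = insert (Suc K) {i0..K}" by (intro atLeastAtMostSuc_conv) simp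
    then have "x \<in> span (insert (f (Suc K)) (f ` {i0..K}))" using Suc.prems by simp
    then obtain a where a: "x - a *s f (Suc K) \<in> span (f ` {i0..K})" by (auto simp: span_insert)
    show ?thesis
    proof (cases "a = 0")
      case True then show ?thesis using a Suc by simp
    next
      case False
      have sub1: "span (f ` {i0..K}) \<subseteq> span (f ` {..<Suc K})" by (intro span_mono image_mono) auto
      have sub2: "span (f ` {..<i0}) \<subseteq> span (f ` {..<Suc K})"
        using \<open>\<not> Suc K < i0\<close> by (intro span_mono image_mono) auto
      have h1: "x \<in> span (f ` {..<Suc K})" using sub2 Suc.prems(2) by auto
      have h2: "x - a *s f (Suc K) \<in> span (f ` {..<Suc K})" using a sub1 by auto
      have "x - (x - a *s f (Suc K)) \<in> span (f ` {..<Suc K})" using span_diff[OF h1 h2] .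
      then have "a *s f (Suc K) \<in> span (f ` {..<Suc K})" by simp
      then have "(1/a) *s (a *s f (Suc K)) \<in> span (f ` {..<Suc K})" by (rule span_scale)
      then have "f (Suc K) \<in> span (f ` {..<Suc K})" using False by simp
      then show ?thesis using hyp by blast
    qed
  qed
qed

lemma fin_0:
  assumes simple: "gdu_simple scale U D H" and v: "v \<noteq> 0" "H v = l *s v" "U (D v) = b *s v"
    and m: "m \<ge> 1" and Dm: "\<forall>x. (D^^m) x = 0"
  shows "fin_dim scale"
proof -
  have ex: "\<exists>k. (D^^Suc k) v = 0" using m Dm by (intro exI[of _ "m - 1"]) simp
  define k where "k = (LEAST k. (D^^Suc k) v = 0)"
  have k1: "(D^^Suc k) v = 0" unfolding k_def by (rule LeastI_ex[OF ex])
  define w where "w = (D^^k) v"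
  have wne: "w \<noteq> 0"
  proof (cases k)
    case 0 then show ?thesis using v w_def by simp
  next
    case (Suc k')
    then have "k' < k" by simp
    then have "(D^^Suc k') v \<noteq> 0" unfolding k_def by (rule not_less_Least)
    then show ?thesis using Suc w_def by simp
  qed
  have Dw: "D w = 0" using k1 w_def by simp
  define l' where "l' = lamD r g l k"
  have Hw: "H w = l' *s w" using eigD[OF v(2)] w_def l'_def by simp
  have UDw: "U (D w) = 0 *s w" using Dw by simp
  define f where "f i = (U^^i) w" for i
  define bb where "bb = bU phi r s g l' 0"
  have D0j: "(D^^j) 0 = 0" for j using funpow_sc[OF Dsc, of j 0 0] by simp
  have spanf: "span (range f) = UNIV"
  proof -
    have "UNIV = span (range (\<lambda>i. (U^^i) w) \<union> range (\<lambda>j. (D^^j) w))"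
      using span_all[OF simple wne Hw UDw] by simp
    also have "\<dots> \<subseteq> span (range f)"
    proof (intro span_minimal subspace_span subsetI)
      fix x assume "x \<in> range (\<lambda>i. (U^^i) w) \<union> range (\<lambda>j. (D^^j) w)"
      then consider i where "x = (U^^i) w" | j where "x = (D^^j) w" by blast
      then show "x \<in> span (range f)"
      proof cases
        case 1 then show ?thesis unfolding f_def by (intro span_base) auto
      next
        case (2 j)
        show ?thesis
        proof (cases j)
          case 0 then have "x = f 0" using 2 f_def by simp
          then show ?thesis by (intro span_base) auto
        next
          case (Suc j')
          then have "x = 0" using 2 Dw D0j by (simp add: funpow_Suc_right del: funpow.simps)
          then show ?thesis by (simp add: span_zero)
        qed
      qed
    qed
    finally show ?thesis by auto
  qed
  have "(D^^m) ((U^^(m+0)) w) = (\<Prod>t<m. bb (0+t+1)) *s (U^^0) w"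
    unfolding bb_def by (rule DpowU[OF Hw UDw])
  then have "(\<Prod>t<m. bb (t+1)) = 0" using Dm wne by simp
  then obtain t where t: "t < m" "bb (t+1) = 0" by auto
  define i0 where "i0 = t + 1"
  have i0: "i0 \<ge> 1" "bb i0 = 0" using t i0_def by auto
  have DUf: "D (f (Suc j)) = bb (Suc j) *s f j" for j
    unfolding f_def bb_def by (rule DUU[OF Hw UDw])
  show ?thesis
  proof (cases "\<exists>N. f N \<in> span (f ` {..<N})")
    case True
    then obtain N where N: "f N \<in> span (f ` {..<N})" by blast
    have "N \<noteq> 0" using N wne f_def by (cases N) auto
    have fk: "f k \<in> span (f ` {..<N})" for k
    proof (induct k)
      case 0 then show ?case using \<open>N \<noteq> 0\<close> by (intro span_base) auto
    next
      case (Suc k)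
      have "U (f k) \<in> span (f ` {..<N})"
      proof (rule map_span[OF Uadd Usc _ Suc])
        fix y assume "y \<in> f ` {..<N}"
        then obtain j where j: "j < N" "y = f j" by auto
        then have "U y = f (Suc j)" using f_def by simp
        then show "U y \<in> span (f ` {..<N})"
        proof (cases "Suc j < N")
          case True then show ?thesis using \<open>U y = f (Suc j)\<close> by (auto intro: span_base)
        next
          case False then have "Suc j = N" using j by simp
          then show ?thesis using \<open>U y = f (Suc j)\<close> N by simp
        qed
      qed
      then show ?case using f_def by simp
    qed
    have "UNIV \<subseteq> span (f ` {..<N})"
      using spanf fk by (metis image_subsetI span_minimal subspace_span)
    then show ?thesis unfolding fin_dim_def by (intro exI[of _ "f ` {..<N}"]) auto
  next
    case False
    then have hyp: "\<forall>N. f N \<notin> span (f ` {..<N})" by blast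
    let ?W = "span (f ` {i0..})"
    have sU: "U x \<in> ?W" if "x \<in> ?W" for x
    proof (rule map_span[OF Uadd Usc _ that])
      fix y assume "y \<in> f ` {i0..}"
      then obtain j where j: "j \<ge> i0" "y = f j" by auto
      then have "U y = f (Suc j)" using f_def by simp
      then show "U y \<in> ?W" using j by (auto intro: span_base)
    qed
    have sH: "H x \<in> ?W" if "x \<in> ?W" for x
    proof (rule map_span[OF Hadd Hsc _ that])
      fix y assume "y \<in> f ` {i0..}"
      then obtain j where j: "j \<ge> i0" "y = f j" by auto
      then have "H y = lamU r g l' j *s y" using f_def eigU[OF Hw] by simp
      then show "H y \<in> ?W" using j by (auto intro: span_base span_scale)
    qed
    have sD: "D x \<in> ?W" if "x \<in> ?W" for x
    proof (rule map_span[OF Dadd Dsc _ that])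
      fix y assume "y \<in> f ` {i0..}"
      then obtain j where j: "j \<ge> i0" "y = f j" by auto
      then obtain j' where j': "j = Suc j'" using i0 by (cases j) auto
      have Dy: "D y = bb j *s f j'" using DUf j j' by simp
      show "D y \<in> ?W"
      proof (cases "j = i0")
        case True then show ?thesis using Dy i0 by (simp add: span_zero)
      next
        case False
        then have "j' \<ge> i0" using j j' by simp
        then show ?thesis using Dy by (auto intro: span_base span_scale)
      qed
    qed
    have "?W = {0} \<or> ?W = UNIV"
      using simple sU sD sH unfolding gdu_simple_def by (meson image_subsetI subspace_span)
    then show ?thesis
    proof
      assume "?W = {0}"
      moreover have "f i0 \<in> ?W" by (intro span_base) auto
      ultimately have "f i0 = 0" by simp
      then show ?thesis using hyp span_zero by metis
    next
      assume "?W = UNIV"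
      then have wW: "w \<in> ?W" by simp
      have "\<exists>K. x \<in> span (f ` {i0..K})" if "x \<in> ?W" for x
        using that
      proof (induct rule: span_induct)
        case base
        show ?case unfolding subspace_def
        proof (intro conjI allI impI ballI)
          show "0 \<in> Collect (\<lambda>x. \<exists>K. x \<in> span (f ` {i0..K}))" by (auto simp: span_zero)
        next
          fix x y assume "x \<in> Collect (\<lambda>x. \<exists>K. x \<in> span (f ` {i0..K}))"
            "y \<in> Collect (\<lambda>x. \<exists>K. x \<in> span (f ` {i0..K}))"
          then obtain K1 K2 where "x \<in> span (f ` {i0..K1})" "y \<in> span (f ` {i0..K2})" by auto
          moreover have "span (f ` {i0..K1}) \<subseteq> span (f ` {i0..max K1 K2})"
            "span (f ` {i0..K2}) \<subseteq> span (f ` {i0..max K1 K2})"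
            by (intro span_mono image_mono; auto)+
          ultimately show "x + y \<in> Collect (\<lambda>x. \<exists>K. x \<in> span (f ` {i0..K}))"
            by (auto intro!: span_add)
        next
          fix c x assume "x \<in> Collect (\<lambda>x. \<exists>K. x \<in> span (f ` {i0..K}))"
          then show "c *s x \<in> Collect (\<lambda>x. \<exists>K. x \<in> span (f ` {i0..K}))"
            by (auto intro: span_scale)
        qed
      next
        case (step x)
        then obtain j where "j \<ge> i0" "x = f j" by auto
        then show ?case by (intro exI[of _ j]) (auto intro: span_base)
      qed
      then obtain K where K: "w \<in> span (f ` {i0..K})" using wW by blast
      have "w = f 0" using f_def by simp
      then have "w \<in> span (f ` {..<i0})" using i0 by (auto intro: span_base)
      then have "w = 0" using indep_aux[OF hyp i0(1) K] by simp
      then show ?thesis using wne by simp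
    qed
  qed
qed


lemma main_D:
  assumes simple: "gdu_simple scale U D H" and v: "v \<noteq> 0" "H v = l *s v" "U (D v) = b *s v"
    and m: "m \<ge> 1" and Dm: "\<forall>x. (D^^m) x = c *s x"
  shows "fin_dim scale"
proof (cases "c = 0")
  case True then show ?thesis using fin_0[OF simple v m] Dm by simp
next
  case False then show ?thesis using fin_c[OF simple v m Dm] by simp
qed

lemma poly_op_smult: "a \<noteq> 0 \<Longrightarrow> poly_op scale (smult a p) F x = a *s poly_op scale p F x"
  unfolding poly_op_def by (simp add: degree_smult_eq scale_sum_right)

lemma swap: "gdu scale (smult (-1/s) phi) (1/r) (1/s) (-g/r) D U H"
proof unfold_locales
  fix x
  have "r *s (H (D x) - (1/r) *s D (H x)) = r *s ((-g/r) *s D x)"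
    using rel2[of x] r0 by (simp add: scale_right_diff_distrib algebra_simps)
  then show "H (D x) - (1/r) *s D (H x) = (-g/r) *s D x" by (rule scale_left_imp_eq[OF r0])
  have "r *s (U (H x) - (1/r) *s H (U x)) = r *s ((-g/r) *s U x)"
    using rel1[of x] r0 by (simp add: scale_right_diff_distrib algebra_simps)
  then show "U (H x) - (1/r) *s H (U x) = (-g/r) *s U x" by (rule scale_left_imp_eq[OF r0])
  have "s *s (U (D x) - (1/s) *s D (U x)) = s *s ((-1/s) *s poly_op scale phi H x)"
    using rel3[of x] s0 by (simp add: scale_right_diff_distrib algebra_simps)
  then have "U (D x) - (1/s) *s D (U x) = (-1/s) *s poly_op scale phi H x"
    by (rule scale_left_imp_eq[OF s0])
  moreover have "poly_op scale (smult (-1/s) phi) H x = (-1/s) *s poly_op scale phi H x"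
    by (rule poly_op_smult) (use s0 in simp)
  ultimately show "U (D x) - (1/s) *s D (U x) = poly_op scale (smult (-1/s) phi) H x"
    by (simp only:)
qed (auto simp: Uadd Usc Dadd Dsc Hadd Hsc r0 s0)

end

lemma to_gdu:
  assumes "r * s \<noteq> 0" "gdu_module phi r s g scale U D H"
  shows "gdu scale phi r s g U D H"
  using assms
  unfolding gdu_module_def gdu_def gdu_axioms_def linear_iff_module_hom module_hom_def
    module_hom_axioms_def
  by (auto simp: module_iff_vector_space)

theorem mainTheorem3:
  fixes phi :: "complex poly" and r s \<gamma> :: complex
    and scale :: "complex \<Rightarrow> 'v::ab_group_add \<Rightarrow> 'v"
    and U D H :: "'v \<Rightarrow> 'v"
  assumes "r * s \<noteq> 0"
    and "gdu_module phi r s \<gamma> scale U D H"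
    and "gdu_simple scale U D H"
    and "\<exists>m\<ge>1. (\<exists>c. \<forall>v. (D ^^ m) v = scale c v) \<or> (\<exists>c. \<forall>v. (U ^^ m) v = scale c v)"
    and "\<exists>v. weight_vector scale U D H v"
  shows "fin_dim scale"
proof -
  interpret G: gdu scale phi r s \<gamma> U D H by (rule to_gdu[OF assms(1,2)])
  obtain v lam \<beta> where v: "v \<noteq> 0" "H v = scale lam v" "U (D v) = scale \<beta> v"
    using assms(5) unfolding weight_vector_def by blast
  obtain m where m: "m \<ge> 1"
    and mc: "(\<exists>c. \<forall>v. (D ^^ m) v = scale c v) \<or> (\<exists>c. \<forall>v. (U ^^ m) v = scale c v)"
    using assms(4) by blast
  from mc show ?thesis
  proof
    assume "\<exists>c. \<forall>v. (D ^^ m) v = scale c v"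
    then obtain c where "\<forall>v. (D ^^ m) v = scale c v" by blast
    then show ?thesis using G.main_D[OF assms(3) v m] by blast
  next
    assume "\<exists>c. \<forall>v. (U ^^ m) v = scale c v"
    then obtain c where c: "\<forall>v. (U ^^ m) v = scale c v" by blast
    interpret S: gdu scale "smult (-1/s) phi" "1/r" "1/s" "-\<gamma>/r" D U H by (rule G.swap)
    have simple': "gdu_simple scale D U H" using assms(3) unfolding gdu_simple_def by blast
    have "D (U v) = scale (s * \<beta> + poly phi lam) v" by (rule G.DU_eigen[OF v(2,3)])
    then show ?thesis using S.main_D[OF simple' v(1,2) _ m c] by blast
  qed
qed

end
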